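(* Let $(a_m)_{m\ge1}$ be positive reals with $\sum_m a_m<\infty$, put $M=\sup_m a_m$, and let $(t_m)_{m\ge1}$ be complex numbers with $\sup_m|t_m|\le T<\infty$. Then each $\theta_{\infty;k}(\vec t)$ is an absolutely convergent series, and for all complex $z$ with $|z|M(1+T)<1$ the series $\sum_{k\ge0}\theta_{\infty;k}(\vec t)z^k$ converges absolutely and \[ \sum_{k\ge0}\theta_{\infty;k}(\vec t)z^k=\prod_{m=1}^{\infty}\Big(1+\frac{a_mz}{1-a_mzt_m}\Big)=\exp\Big(\sum_{j=1}^\infty\frac{z^j}{j}\sum_{m=1}^\infty a_m^j\big(t_m^j-(t_m-1)^j\big)\Big). \] In particular, with $t_m=t$ for all $m$ and $A_\infty(j)=\sum_{m\ge1}a_m^j$, $\sum_k\theta_{\infty;k}(t)z^k=\prod_{m\ge1}\big(1+\frac{a_mz}{1-a_mzt}\big)=\exp\big(\sum_{j\ge1}\frac{z^j}{j}A_\infty(j)(t^j-(t-1)^j)\big)$.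
   Context: For $k\ge0$ let $\mathcal M_{\infty,k}=\{(\ell_1,\dots,\ell_k)\in\mathbb N^k:\ell_1\ge\cdots\ge\ell_k\ge1\}$, $w(\vec\ell)=\prod_j a_{\ell_j}$, $\sigma(\vec\ell)=|\{1\le j\le k-1:\ell_j=\ell_{j+1}\}|$, and $\sigma^{(i)}(\vec\ell)=|\{1\le j\le k-1:\ell_j=\ell_{j+1}=i\}|$. Define $\theta_{\infty;k}(\vec t)=\sum_{\vec\ell\in\mathcal M_{\infty,k}}w(\vec\ell)\prod_{i\ge1}t_i^{\sigma^{(i)}(\vec\ell)}$ and $\theta_{\infty;k}(t)=\sum_{\vec\ell\in\mathcal M_{\infty,k}}w(\vec\ell)t^{\sigma(\vec\ell)}$, with value $1$ for $k=0$. *)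

theory Defs
  imports "HOL-Analysis.Analysis"
begin

text \<open>Non-increasing tuples (l_1 >= ... >= l_k >= 1), represented as lists (0-based positions).\<close>
definition Mset :: "nat \<Rightarrow> nat list set" where
  "Mset k = {l. length l = k \<and> sorted_wrt (\<ge>) l \<and> (\<forall>x\<in>set l. 1 \<le> x)}"

definition wt :: "(nat \<Rightarrow> real) \<Rightarrow> nat list \<Rightarrow> real" where
  "wt a l = prod_list (map a l)"

definition sig :: "nat list \<Rightarrow> nat" where
  "sig l = card {j. j + 1 < length l \<and> l ! j = l ! (j + 1)}"

definition sig_i :: "nat \<Rightarrow> nat list \<Rightarrow> nat" where
  "sig_i i l = card {j. j + 1 < length l \<and> l ! j = i \<and> l ! (j + 1) = i}"

text \<open>Summand of theta_{infty;k}(vec t): the product over i >= 1 of t_i^{sigma^(i)} has only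
  finitely many factors different from 1 (those with i in set l), so it is a finite product.\<close>
definition theta_vec_term :: "(nat \<Rightarrow> real) \<Rightarrow> (nat \<Rightarrow> complex) \<Rightarrow> nat list \<Rightarrow> complex" where
  "theta_vec_term a t l = complex_of_real (wt a l) * (\<Prod>i\<in>set l. t i ^ sig_i i l)"

definition theta_vec :: "(nat \<Rightarrow> real) \<Rightarrow> (nat \<Rightarrow> complex) \<Rightarrow> nat \<Rightarrow> complex" where
  "theta_vec a t k = infsum (theta_vec_term a t) (Mset k)"

definition theta_sc_term :: "(nat \<Rightarrow> real) \<Rightarrow> complex \<Rightarrow> nat list \<Rightarrow> complex" where
  "theta_sc_term a t l = complex_of_real (wt a l) * t ^ sig l"

definition theta_sc :: "(nat \<Rightarrow> real) \<Rightarrow> complex \<Rightarrow> nat \<Rightarrow> complex" where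
  "theta_sc a t k = infsum (theta_sc_term a t) (Mset k)"

end

theory Submission imports Defs "HOL-Library.Multiset" begin

lemma sig_i_Cons: "sig_i i (x # l) = (if l \<noteq> [] \<and> x = i \<and> hd l = i then 1 else 0) + sig_i i l"
proof -
  have eq: "{j. j+1 < length (x#l) \<and> (x#l)!j = i \<and> (x#l)!(j+1) = i} =
     (if l\<noteq>[] \<and> x=i \<and> hd l = i then {0} else {}) \<union> Suc ` {j. j+1<length l \<and> l!j = i \<and> l!(j+1) = i}"
    (is "?L = ?A \<union> ?B")
  proof (intro set_eqI iffI)
    fix j assume "j \<in> ?L"
    then show "j \<in> ?A \<union> ?B"
      by (cases j) (auto simp: hd_conv_nth)
  next
    fix j assume "j \<in> ?A \<union> ?B"
    then show "j \<in> ?L"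
      by (cases "l = []") (auto simp: hd_conv_nth split: if_splits)
  qed
  have fin: "finite ?B" by (rule finite_imageI) (rule finite_subset[of _ "{..<length l}"], auto)
  have dis: "?A \<inter> ?B = {}" by auto
  have "card ?L = card ?A + card ?B"
    unfolding eq by (rule card_Un_disjoint) (use fin dis in auto)
  also have "card ?B = sig_i i l" unfolding sig_i_def by (simp add: card_image)
  finally show ?thesis unfolding sig_i_def by simp
qed

lemma sig_i_Nil: "sig_i i [] = 0" by (simp add: sig_i_def)

lemma sig_i_sorted: "sorted_wrt (\<ge>) l \<Longrightarrow> sig_i i l = count_list l i - 1"
proof (induction l)
  case Nil then show ?case by (simp add: sig_i_Nil)
next
  case (Cons x l)
  then have IH: "sig_i i l = count_list l i - 1" and s: "\<forall>y\<in>set l. y \<le> x" by auto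
  show ?case
  proof (cases "l \<noteq> [] \<and> x = i \<and> hd l = i")
    case True
    then have "count_list l i \<ge> 1" by (cases l) auto
    then show ?thesis using True IH by (simp add: sig_i_Cons)
  next
    case False
    show ?thesis
    proof (cases "x = i")
      case True
      with False have "l = [] \<or> hd l \<noteq> i" by auto
      then have "i \<notin> set l" using s True Cons.prems
        by (cases l) auto
      then show ?thesis using True False IH by (simp add: sig_i_Cons)
    next
      case False
      then show ?thesis using IH by (simp add: sig_i_Cons)
    qed
  qed
qed

lemma prod_list_count:
  fixes f :: "nat \<Rightarrow> 'b::comm_monoid_mult"
  assumes "finite X" "set l \<subseteq> X"
  shows "prod_list (map f l) = (\<Prod>i\<in>X. f i ^ count_list l i)"
  using assms(2)
proof (induction l)
  case Nil then show ?case by simp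
next
  case (Cons x l)
  then have x: "x \<in> X" and IH: "prod_list (map f l) = (\<Prod>i\<in>X. f i ^ count_list l i)" by auto
  have "(\<Prod>i\<in>X. f i ^ count_list (x#l) i) = f x ^ count_list (x#l) x * (\<Prod>i\<in>X-{x}. f i ^ count_list (x#l) i)"
    by (rule prod.remove[OF assms(1) x])
  also have "(\<Prod>i\<in>X-{x}. f i ^ count_list (x#l) i) = (\<Prod>i\<in>X-{x}. f i ^ count_list l i)"
    by (rule prod.cong) auto
  also have "f x ^ count_list (x#l) x = f x * f x ^ count_list l x" by simp
  also have "(\<Prod>i\<in>X. f i ^ count_list l i) = f x ^ count_list l x * (\<Prod>i\<in>X-{x}. f i ^ count_list l i)"
    by (rule prod.remove[OF assms(1) x])
  ultimately show ?case using IH by (simp add: mult.assoc)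
qed

definition G :: "(nat\<Rightarrow>real) \<Rightarrow> (nat\<Rightarrow>complex) \<Rightarrow> complex \<Rightarrow> nat \<Rightarrow> nat \<Rightarrow> complex" where
  "G a t z i r = of_real (a i ^ r) * z ^ r * t i ^ (r - 1)"

definition Fz :: "(nat\<Rightarrow>real) \<Rightarrow> (nat\<Rightarrow>complex) \<Rightarrow> complex \<Rightarrow> nat list \<Rightarrow> complex" where
  "Fz a t z l = theta_vec_term a t l * z ^ length l"

lemma Fz_prod:
  assumes "sorted_wrt (\<ge>) l" "finite X" "set l \<subseteq> X"
  shows "Fz a t z l = (\<Prod>i\<in>X. G a t z i (count_list l i))"
proof -
  have w: "wt a l = (\<Prod>i\<in>X. a i ^ count_list l i)"
    unfolding wt_def by (rule prod_list_count[OF assms(2,3)])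
  have zz: "z ^ length l = (\<Prod>i\<in>X. z ^ count_list l i)"
  proof -
    have "z ^ length l = prod_list (map (\<lambda>_. z) l)" by (induction l) auto
    also have "\<dots> = (\<Prod>i\<in>X. z ^ count_list l i)" by (rule prod_list_count[OF assms(2,3)])
    finally show ?thesis .
  qed
  have tt: "(\<Prod>i\<in>set l. t i ^ sig_i i l) = (\<Prod>i\<in>X. t i ^ (count_list l i - 1))"
  proof -
    have "(\<Prod>i\<in>set l. t i ^ sig_i i l) = (\<Prod>i\<in>set l. t i ^ (count_list l i - 1))"
      by (rule prod.cong) (auto simp: sig_i_sorted[OF assms(1)])
    also have "\<dots> = (\<Prod>i\<in>X. t i ^ (count_list l i - 1))"
      by (rule prod.mono_neutral_left) (use assms in auto)
    finally show ?thesis .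
  qed
  show ?thesis
    unfolding Fz_def theta_vec_term_def w tt zz G_def of_real_prod of_real_power
    by (simp add: prod.distrib mult_ac)
qed

fun mk :: "(nat \<Rightarrow> nat) \<Rightarrow> nat \<Rightarrow> nat list" where
  "mk f 0 = []"
| "mk f (Suc n) = replicate (f (Suc n)) (Suc n) @ mk f n"

lemma mk_set: "set (mk f n) \<subseteq> {1..n}"
  by (induction n) auto

lemma count_list_replicate': "count_list (replicate k x) i = (if i = x then k else 0)"
  by (induction k) auto

lemma sorted_replicate': "sorted_wrt (\<ge>) (replicate k (x::nat))"
  by (induction k) auto

lemma mk_sorted: "sorted_wrt (\<ge>) (mk f n)"
proof (induction n)
  case 0 then show ?case by simp
next
  case (Suc n)
  have "\<forall>x\<in>set (replicate (f (Suc n)) (Suc n)). \<forall>y\<in>set (mk f n). y \<le> x"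
    using mk_set[of f n] by auto
  then show ?case using Suc sorted_replicate'[of "f (Suc n)" "Suc n"]
    by (simp add: sorted_wrt_append)
qed

lemma mk_count: "count_list (mk f n) i = (if i \<in> {1..n} then f i else 0)"
proof (induction n)
  case 0 then show ?case by simp
next
  case (Suc n)
  have "count_list (replicate (f (Suc n)) (Suc n)) i = (if i = Suc n then f (Suc n) else 0)"
    by (rule count_list_replicate')
  then show ?case using Suc by auto
qed

definition Sall :: "nat list set" where "Sall = {l. sorted_wrt (\<ge>) l \<and> (\<forall>x\<in>set l. 1 \<le> x)}"
definition SN :: "nat \<Rightarrow> nat list set" where "SN N = {l \<in> Sall. set l \<subseteq> {1..N}}"

lemma sorted_count_eq:
  assumes "sorted_wrt (\<ge>) l1" "sorted_wrt (\<ge>) (l2::nat list)" "\<And>i. count_list l1 i = count_list l2 i"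
  shows "l1 = l2"
proof -
  have s1: "sorted (rev l1)" and s2: "sorted (rev l2)"
    using assms(1,2) by (simp_all add: sorted_wrt_rev)
  have m: "mset (rev l1) = mset (rev l2)"
    by (rule multiset_eqI) (simp add: count_mset assms(3))
  have "sort (rev l2) = rev l1" by (rule properties_for_sort[OF m s1])
  moreover have "sort (rev l2) = rev l2" using s2 by (simp add: sorted_sort_id)
  ultimately show ?thesis by simp
qed

lemma mk_bij: "bij_betw (\<lambda>f. mk f N) (PiE {1..N} (\<lambda>_. UNIV)) (SN N)"
proof (rule bij_betwI')
  fix f g :: "nat \<Rightarrow> nat" assume f: "f \<in> PiE {1..N} (\<lambda>_. UNIV)" and g: "g \<in> PiE {1..N} (\<lambda>_. UNIV)"
  show "(mk f N = mk g N) = (f = g)"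
  proof
    assume "mk f N = mk g N"
    then have "\<And>i. i \<in> {1..N} \<Longrightarrow> f i = g i" using mk_count[of f N] mk_count[of g N] by metis
    then show "f = g" using f g
      by (intro ext) (metis PiE_arb atLeastAtMost_iff)
  qed simp
next
  fix f :: "nat \<Rightarrow> nat" assume "f \<in> PiE {1..N} (\<lambda>_. UNIV)"
  show "mk f N \<in> SN N" using mk_set[of f N] mk_sorted[of f N] by (auto simp: SN_def Sall_def)
next
  fix l assume l: "l \<in> SN N"
  show "\<exists>f\<in>PiE {1..N} (\<lambda>_. UNIV). l = mk f N"
  proof (intro bexI)
    show "l = mk (restrict (count_list l) {1..N}) N"
      by (rule sorted_count_eq) (use l in \<open>auto simp: SN_def Sall_def mk_sorted mk_count count_list_0_iff subset_iff\<close>)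
  qed simp
qed

lemma PiE_has_sum:
  fixes f :: "nat \<Rightarrow> nat \<Rightarrow> 'c::{banach, real_normed_div_algebra, comm_semiring_1}"
  assumes fin: "finite A" and hs: "\<And>x. x\<in>A \<Longrightarrow> (f x has_sum s x) UNIV"
    and hn: "\<And>x. x\<in>A \<Longrightarrow> ((\<lambda>y. norm (f x y)) has_sum n x) UNIV"
  shows "((\<lambda>g. \<Prod>x\<in>A. f x (g x)) has_sum (\<Prod>x\<in>A. s x)) (PiE A (\<lambda>_. UNIV))"
proof -
  have bound: "(\<Sum>p\<in>P. norm (\<Prod>x\<in>A. f x (p x))) \<le> (\<Prod>x\<in>A. n x)"
    if P: "P \<subseteq> PiE A (\<lambda>_. UNIV)" "finite P" for P
  proof -
    define B' where "B' x = (\<lambda>p. p x) ` P" for x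
    have finB: "finite (B' x)" for x using P by (simp add: B'_def)
    have PB: "P \<subseteq> PiE A B'" using P by (auto simp: B'_def PiE_def Pi_def)
    have "(\<Sum>p\<in>P. norm (\<Prod>x\<in>A. f x (p x))) \<le> (\<Sum>p\<in>PiE A B'. norm (\<Prod>x\<in>A. f x (p x)))"
      by (rule sum_mono2) (use PB fin finB in \<open>auto simp: finite_PiE\<close>)
    also have "\<dots> = (\<Sum>p\<in>PiE A B'. \<Prod>x\<in>A. norm (f x (p x)))"
      by (simp add: prod_norm)
    also have "\<dots> = (\<Prod>x\<in>A. \<Sum>y\<in>B' x. norm (f x y))"
      by (rule prod_sum_PiE[symmetric]) (use fin finB in auto)
    also have "\<dots> \<le> (\<Prod>x\<in>A. n x)"
      by (rule prod_mono) (auto intro!: sum_nonneg finite_sum_le_has_sum[OF hn] finB)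
    finally show ?thesis .
  qed
  have abs: "(\<lambda>g. \<Prod>x\<in>A. f x (g x)) abs_summable_on PiE A (\<lambda>_. UNIV)"
    by (rule nonneg_bdd_above_summable_on) (use bound in \<open>auto simp: bdd_above_def\<close>)
  then have summ: "(\<lambda>g. \<Prod>x\<in>A. f x (g x)) summable_on PiE A (\<lambda>_. UNIV)"
    by (rule abs_summable_summable)
  have "infsum (\<lambda>g. \<Prod>x\<in>A. f x (g x)) (PiE A (\<lambda>_. UNIV)) = (\<Prod>x\<in>A. infsum (f x) UNIV)"
    by (rule infsum_prod_PiE_abs[OF fin]) (use hn in \<open>auto simp: summable_on_def\<close>)
  also have "\<dots> = (\<Prod>x\<in>A. s x)"
    by (rule prod.cong) (use hs in \<open>auto simp: infsumI\<close>)
  finally show ?thesis using summ by (metis has_sum_infsum)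
qed

lemma G_sums:
  assumes a: "a i \<ge> 0" and lt: "a i * norm z * norm (t i) < 1"
  shows "(G a t z i has_sum (1 + of_real (a i) * z / (1 - of_real (a i) * z * t i))) UNIV"
    and "((\<lambda>r. norm (G a t z i r)) has_sum (1 + a i * norm z / (1 - a i * norm z * norm (t i)))) UNIV"
proof -
  define w where "w = of_real (a i) * z * t i"
  have nw: "norm w < 1" using lt a by (simp add: w_def norm_mult)
  have GS: "G a t z i (Suc r) = of_real (a i) * z * w ^ r" for r
    by (simp add: G_def w_def power_mult_distrib mult_ac)
  have nGS: "norm (G a t z i (Suc r)) = a i * norm z * (a i * norm z * norm (t i)) ^ r" for r
    using a by (simp add: GS w_def norm_mult norm_power power_mult_distrib)
  have G0: "G a t z i 0 = 1" by (simp add: G_def)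
  have s1: "(\<lambda>r. G a t z i (Suc r)) sums (of_real (a i) * z * (1 / (1 - w)))"
    unfolding GS by (rule sums_mult) (use geometric_sums[OF nw] in \<open>simp add: divide_inverse\<close>)
  have s2: "G a t z i sums (1 + of_real (a i) * z / (1 - of_real (a i) * z * t i))"
    using s1 unfolding sums_Suc_iff G0 by (simp add: w_def add.commute)
  have r0: "a i * norm z * norm (t i) \<ge> 0" using a by simp
  have n1: "(\<lambda>r. norm (G a t z i (Suc r))) sums (a i * norm z * (1 / (1 - a i * norm z * norm (t i))))"
    unfolding nGS by (rule sums_mult) (use geometric_sums[of "a i * norm z * norm (t i)"] lt r0 in \<open>simp add: divide_inverse\<close>)
  have n2: "(\<lambda>r. norm (G a t z i r)) sums (1 + a i * norm z / (1 - a i * norm z * norm (t i)))"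
    using n1 sums_Suc_iff[of "\<lambda>r. norm (G a t z i r)"] G0 by (simp add: add.commute)
  have sn: "summable (\<lambda>r. norm (G a t z i r))" using n2 by (simp add: sums_iff)
  show "(G a t z i has_sum (1 + of_real (a i) * z / (1 - of_real (a i) * z * t i))) UNIV"
    by (rule norm_summable_imp_has_sum[OF sn s2])
  show "((\<lambda>r. norm (G a t z i r)) has_sum (1 + a i * norm z / (1 - a i * norm z * norm (t i)))) UNIV"
    by (rule norm_summable_imp_has_sum) (use sn n2 in auto)
qed

lemma finite_case:
  assumes H: "\<And>i. i\<in>{1..N} \<Longrightarrow> a i \<ge> 0 \<and> a i * norm z * norm (t i) < 1"
  shows "(Fz a t z has_sum (\<Prod>i\<in>{1..N}. 1 + of_real (a i) * z / (1 - of_real (a i) * z * t i))) (SN N)"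
    and "((\<lambda>l. norm (Fz a t z l)) has_sum (\<Prod>i\<in>{1..N}. 1 + a i * norm z / (1 - a i * norm z * norm (t i)))) (SN N)"
proof -
  have eq: "Fz a t z (mk f N) = (\<Prod>i\<in>{1..N}. G a t z i (f i))" for f
  proof -
    have "Fz a t z (mk f N) = (\<Prod>i\<in>{1..N}. G a t z i (count_list (mk f N) i))"
      by (rule Fz_prod) (use mk_sorted mk_set in auto)
    also have "\<dots> = (\<Prod>i\<in>{1..N}. G a t z i (f i))"
      by (rule prod.cong) (auto simp: mk_count)
    finally show ?thesis .
  qed
  have neq: "norm (Fz a t z (mk f N)) = (\<Prod>i\<in>{1..N}. norm (G a t z i (f i)))" for f
    by (simp add: eq prod_norm)
  have "((\<lambda>f. Fz a t z (mk f N)) has_sum (\<Prod>i\<in>{1..N}. 1 + of_real (a i) * z / (1 - of_real (a i) * z * t i))) (PiE {1..N} (\<lambda>_. UNIV))"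
    unfolding eq
    by (rule PiE_has_sum[where n="\<lambda>i. 1 + a i * norm z / (1 - a i * norm z * norm (t i))"]) (use G_sums H in auto)
  then show "(Fz a t z has_sum (\<Prod>i\<in>{1..N}. 1 + of_real (a i) * z / (1 - of_real (a i) * z * t i))) (SN N)"
    using has_sum_reindex_bij_betw[OF mk_bij, of "Fz a t z"] by blast
  have "((\<lambda>f. norm (Fz a t z (mk f N))) has_sum (\<Prod>i\<in>{1..N}. 1 + a i * norm z / (1 - a i * norm z * norm (t i)))) (PiE {1..N} (\<lambda>_. UNIV))"
    unfolding neq
    by (rule PiE_has_sum[where n="\<lambda>i. 1 + a i * norm z / (1 - a i * norm z * norm (t i))"]) (use G_sums H in auto)
  then show "((\<lambda>l. norm (Fz a t z l)) has_sum (\<Prod>i\<in>{1..N}. 1 + a i * norm z / (1 - a i * norm z * norm (t i)))) (SN N)"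
    using has_sum_reindex_bij_betw[OF mk_bij, of "\<lambda>l. norm (Fz a t z l)"] by blast
qed


lemma log_series:
  fixes x :: complex
  assumes "norm x < 1"
  shows "(\<lambda>j. x ^ Suc j / of_nat (Suc j)) sums (- ln (1 - x))"
proof -
  have "(\<lambda>n. - ((-(-x))^n) / of_nat n) sums ln (1 + -x)"
    by (rule Ln_series') (use assms in simp)
  then have "(\<lambda>n. - (x^n / of_nat n)) sums ln (1 - x)" by simp
  then have "(\<lambda>n. x^n / of_nat n) sums (- ln (1 - x))"
    using sums_minus by fastforce
  then show ?thesis using sums_Suc_iff[of "\<lambda>n. x^n / of_nat n"] by simp
qed

lemma log_factor:
  fixes a :: real and z t :: complex
  assumes a: "a \<ge> 0" and lt: "a * norm z * (1 + norm t) < 1"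
  shows "(\<lambda>j. z ^ Suc j / of_nat (Suc j) * (of_real a ^ Suc j * (t ^ Suc j - (t - 1) ^ Suc j)))
           sums (ln (1 - of_real a * z * (t - 1)) - ln (1 - of_real a * z * t))"
    and "exp (ln (1 - of_real a * z * (t - 1)) - ln (1 - of_real a * z * t)) =
           1 + of_real a * z / (1 - of_real a * z * t)"
proof -
  define x where "x = of_real a * z * (t - 1)"
  define y where "y = of_real a * z * t"
  have nx: "norm x \<le> a * norm z * (1 + norm t)"
    unfolding x_def using a
    by (simp add: norm_mult) (metis mult_left_mono mult_nonneg_nonneg norm_ge_zero norm_triangle_ineq4 norm_one add.commute)
  have ny: "norm y \<le> a * norm z * (1 + norm t)"
    unfolding y_def using a by (simp add: norm_mult mult_left_mono)
  have x1: "norm x < 1" using nx lt by linarith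
  have y1: "norm y < 1" using ny lt by linarith
  have eq: "z ^ Suc j / of_nat (Suc j) * (of_real a ^ Suc j * (t ^ Suc j - (t - 1) ^ Suc j))
      = y ^ Suc j / of_nat (Suc j) - x ^ Suc j / of_nat (Suc j)" for j
  proof -
    have yp: "y ^ n = z ^ n * (of_real a ^ n * t ^ n)" and xp: "x ^ n = z ^ n * (of_real a ^ n * (t - 1) ^ n)" for n
      unfolding x_def y_def by (simp_all add: power_mult_distrib)
    show ?thesis unfolding yp xp by (simp add: diff_divide_distrib right_diff_distrib)
  qed
  have "(\<lambda>j. y ^ Suc j / of_nat (Suc j) - x ^ Suc j / of_nat (Suc j)) sums (- ln (1 - y) - - ln (1 - x))"
    by (rule sums_diff[OF log_series[OF y1] log_series[OF x1]])
  then show "(\<lambda>j. z ^ Suc j / of_nat (Suc j) * (of_real a ^ Suc j * (t ^ Suc j - (t - 1) ^ Suc j)))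
           sums (ln (1 - of_real a * z * (t - 1)) - ln (1 - of_real a * z * t))"
    unfolding eq by (simp add: x_def y_def)
  have x0: "1 - x \<noteq> 0" using x1 by (metis eq_iff_diff_eq_0 norm_one order_less_irrefl)
  have y0: "1 - y \<noteq> 0" using y1 by (metis eq_iff_diff_eq_0 norm_one order_less_irrefl)
  have "exp (ln (1 - x) - ln (1 - y)) = (1 - x) / (1 - y)"
    using x0 y0 by (simp add: exp_diff)
  also have "\<dots> = 1 + of_real a * z / (1 - of_real a * z * t)"
    using y0 unfolding x_def y_def by (simp add: field_simps)
  finally show "exp (ln (1 - of_real a * z * (t - 1)) - ln (1 - of_real a * z * t)) =
           1 + of_real a * z / (1 - of_real a * z * t)" by (simp add: x_def y_def)
qed

lemma nat_infsum_suminf: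
  fixes f :: "nat \<Rightarrow> complex"
  assumes "f summable_on UNIV"
  shows "summable f" "infsum f UNIV = suminf f"
proof -
  have "f sums infsum f UNIV" using assms by (intro has_sum_imp_sums) simp
  then show "summable f" "infsum f UNIV = suminf f" by (auto simp: sums_iff)
qed

lemma prod_1N: "(\<Prod>i\<in>{1..N}. f i) = (\<Prod>i<N. f (Suc i))"
proof -
  have "(\<Prod>i\<in>{1..N}. f i) = (\<Prod>i\<in>Suc ` {..<N}. f i)" by (simp add: image_Suc_lessThan)
  also have "\<dots> = (\<Prod>i<N. f (Suc i))" by (simp add: prod.reindex)
  finally show ?thesis .
qed

lemma h_bound:
  fixes A M T :: real and z tt :: complex
  assumes A: "A \<ge> 0" "A \<le> M" and tt: "norm tt \<le> T"
  shows "norm (z ^ Suc j / of_nat (Suc j) * (of_real A ^ Suc j * (tt ^ Suc j - (tt - 1) ^ Suc j)))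
          \<le> 2 * (norm z * M * (1 + T)) ^ j * ((norm z * (1 + T)) * A)"
proof -
  define n where "n = Suc j"
  have T0: "T \<ge> 0" using tt norm_ge_zero order_trans by blast
  have e1: "norm (tt ^ n) \<le> (1 + T) ^ n"
    unfolding norm_power by (rule power_mono) (use tt in auto)
  have "norm (tt - 1) \<le> 1 + T" using tt norm_triangle_ineq4[of tt 1] by simp
  then have e2: "norm ((tt - 1) ^ n) \<le> (1 + T) ^ n"
    unfolding norm_power by (rule power_mono) simp
  have e3: "norm (tt ^ n - (tt - 1) ^ n) \<le> 2 * (1 + T) ^ n"
    using norm_triangle_ineq4[of "tt ^ n" "(tt - 1) ^ n"] e1 e2 by linarith
  have "norm (z ^ n / of_nat n * (of_real A ^ n * (tt ^ n - (tt - 1) ^ n)))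
      = norm z ^ n / real n * (A ^ n * norm (tt ^ n - (tt - 1) ^ n))"
    using A by (simp add: norm_mult norm_divide norm_power)
  also have "\<dots> \<le> norm z ^ n * (A ^ n * norm (tt ^ n - (tt - 1) ^ n))"
  proof -
    have "norm z ^ n / real n \<le> norm z ^ n" unfolding n_def
      by (simp add: divide_le_eq_1 field_simps mult_le_cancel_left1 order_trans[OF _ mult_right_mono])
    then show ?thesis by (rule mult_right_mono) (use A in simp)
  qed
  also have "\<dots> \<le> norm z ^ n * (A ^ n * (2 * (1 + T) ^ n))"
    by (intro mult_left_mono e3) (use A in simp_all)
  also have "\<dots> = 2 * (norm z * A * (1 + T)) ^ n" by (simp add: power_mult_distrib)
  also have "(norm z * A * (1 + T)) ^ n = (norm z * A * (1 + T)) ^ j * (norm z * A * (1 + T))"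
    by (simp add: n_def)
  also have "(norm z * A * (1 + T)) ^ j \<le> (norm z * M * (1 + T)) ^ j"
    by (rule power_mono) (use A T0 in \<open>auto intro!: mult_right_mono mult_left_mono\<close>)
  then have "2 * ((norm z * A * (1 + T)) ^ j * (norm z * A * (1 + T))) \<le> 2 * ((norm z * M * (1 + T)) ^ j * (norm z * A * (1 + T)))"
    using A T0 by (intro mult_left_mono mult_right_mono) auto
  finally show ?thesis unfolding n_def by (simp add: mult_ac)
qed

lemma analytic:
  fixes a :: "nat \<Rightarrow> real" and t :: "nat \<Rightarrow> complex" and z :: complex and T M :: real
  assumes a0: "\<forall>m\<ge>1. a m \<ge> 0" and asum: "summable (\<lambda>m. a (Suc m))"
    and tb: "\<forall>m\<ge>1. norm (t m) \<le> T" and aM: "\<forall>m\<ge>1. a m \<le> M"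
    and rho: "norm z * M * (1 + T) < 1"
  shows "summable (\<lambda>j. z ^ Suc j / of_nat (Suc j) *
             (\<Sum>m. of_real (a (Suc m)) ^ Suc j * (t (Suc m) ^ Suc j - (t (Suc m) - 1) ^ Suc j)))"
    and "(\<lambda>N. \<Prod>i\<in>{1..N}. 1 + of_real (a i) * z / (1 - of_real (a i) * z * t i)) \<longlonglongrightarrow>
           exp (\<Sum>j. z ^ Suc j / of_nat (Suc j) *
             (\<Sum>m. of_real (a (Suc m)) ^ Suc j * (t (Suc m) ^ Suc j - (t (Suc m) - 1) ^ Suc j)))"
proof -
  define r where "r j = z ^ Suc j / of_nat (Suc j) *
             (\<Sum>m. of_real (a (Suc m)) ^ Suc j * (t (Suc m) ^ Suc j - (t (Suc m) - 1) ^ Suc j))" for j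
  define fac where "fac i = 1 + of_real (a i) * z / (1 - of_real (a i) * z * t i)" for i
  have "summable r \<and> (\<lambda>N. \<Prod>i\<in>{1..N}. fac i) \<longlonglongrightarrow> exp (suminf r)"
  proof (cases "z = 0")
    case True
    have r0: "r = (\<lambda>_. 0)" unfolding r_def True by (rule ext) simp
    have "fac i = 1" for i unfolding fac_def True by simp
    then show ?thesis unfolding r0 by simp
  next
    case z0: False
    have T0: "T \<ge> 0" using tb[rule_format, of 1] norm_ge_zero[of "t 1"] by linarith
    have M0: "M \<ge> 0" using a0[rule_format, of 1] aM[rule_format, of 1] by linarith
    define \<rho> where "\<rho> = norm z * M * (1 + T)"
    have \<rho>0: "\<rho> \<ge> 0" using T0 M0 by (simp add: \<rho>_def)
    have \<rho>1: "\<rho> < 1" using rho by (simp add: \<rho>_def)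
    define c where "c = norm z * (1 + T)"
    define h where "h j m = z ^ Suc j / of_nat (Suc j) * (of_real (a (Suc m)) ^ Suc j * (t (Suc m) ^ Suc j - (t (Suc m) - 1) ^ Suc j))" for j m
    define B where "B p = 2 * \<rho> ^ fst p * (c * a (Suc (snd p)))" for p
    have bnd: "norm (h j m) \<le> B (j, m)" for j m
      unfolding h_def B_def \<rho>_def c_def fst_conv snd_conv using a0 aM tb
      by (intro h_bound) auto
    define D where "D = suminf (\<lambda>m. a (Suc m))"
    have hD: "((\<lambda>m. c * a (Suc m)) has_sum (c * D)) UNIV"
    proof -
      have "(\<lambda>m. a (Suc m)) sums D" using asum by (simp add: D_def sums_iff)
      moreover have "(\<lambda>m. norm (a (Suc m))) = (\<lambda>m. a (Suc m))" using a0 by (intro ext) simp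
      ultimately have "((\<lambda>m. a (Suc m)) has_sum D) UNIV"
        using norm_summable_imp_has_sum[of "\<lambda>m. a (Suc m)" D] asum by simp
      then show ?thesis by (rule has_sum_cmult_right)
    qed
    have Bsum: "B summable_on Sigma UNIV (\<lambda>_. UNIV)"
    proof (rule summable_on_SigmaI[where g="\<lambda>j. 2 * \<rho> ^ j * (c * D)"])
      fix j :: nat
      show "((\<lambda>m. B (j, m)) has_sum 2 * \<rho> ^ j * (c * D)) UNIV"
        unfolding B_def using hD by (simp add: has_sum_cmult_right)
    next
      have "summable (\<lambda>j. 2 * \<rho> ^ j * (c * D))"
        using \<rho>0 \<rho>1 by (intro summable_mult2[OF summable_mult[OF summable_geometric]]) simp
      moreover have "c * D \<ge> 0" unfolding c_def D_def using T0 a0 asum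
        by (intro mult_nonneg_nonneg suminf_nonneg) auto
      ultimately show "(\<lambda>j. 2 * \<rho> ^ j * (c * D)) summable_on UNIV"
        using \<rho>0 by (subst summable_on_UNIV_nonneg_real_iff) auto
    next
      fix j m show "B (j, m) \<ge> 0" unfolding B_def c_def using \<rho>0 T0 a0 by auto
    qed
    define H where "H p = h (fst p) (snd p)" for p
    have Habs: "(\<lambda>p. norm (H p)) summable_on UNIV \<times> UNIV"
      by (rule summable_on_comparison_test[OF Bsum]) (auto simp: H_def bnd)
    then have Hs: "H summable_on UNIV \<times> UNIV" by (rule abs_summable_summable)
    have Hs': "(\<lambda>(j,m). h j m) summable_on Sigma UNIV (\<lambda>_. UNIV)"
      using Hs unfolding H_def[abs_def] by (simp add: case_prod_unfold)
    have Hsw: "(\<lambda>(m,j). h j m) summable_on Sigma UNIV (\<lambda>_. UNIV)"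
      using Hs summable_on_swap[of H UNIV UNIV] unfolding H_def[abs_def] by (simp add: case_prod_unfold)
    have row: "(\<lambda>m. h j m) summable_on UNIV" for j
      using summable_on_SigmaD1[OF Hs'] by simp
    have col: "(\<lambda>j. h j m) summable_on UNIV" for m
      using summable_on_SigmaD1[OF Hsw] by simp
    have rows: "(\<lambda>j. infsum (\<lambda>m. h j m) UNIV) summable_on UNIV"
      using summable_on_SigmaD[OF Hs'] row by simp
    have cols: "(\<lambda>m. infsum (\<lambda>j. h j m) UNIV) summable_on UNIV"
      using summable_on_SigmaD[OF Hsw] col by simp
    have swap: "infsum (\<lambda>j. infsum (\<lambda>m. h j m) UNIV) UNIV = infsum (\<lambda>m. infsum (\<lambda>j. h j m) UNIV) UNIV"
      by (rule infsum_swap_banach) (use Hs' in simp)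
    have rj: "r j = infsum (\<lambda>m. h j m) UNIV" for j
    proof -
      define cj where "cj = z ^ Suc j / of_nat (Suc j)"
      have cj0: "cj \<noteq> 0" using z0 unfolding cj_def by (simp del: of_nat_Suc)
      define g where "g m = of_real (a (Suc m)) ^ Suc j * (t (Suc m) ^ Suc j - (t (Suc m) - 1) ^ Suc j)" for m
      have hg: "h j m = cj * g m" for m by (simp add: h_def cj_def g_def)
      have "summable (\<lambda>m. h j m)" using nat_infsum_suminf(1)[OF row] .
      then have "summable (\<lambda>m. inverse cj * h j m)" by (rule summable_mult)
      then have sg: "summable g" using cj0 by (simp add: hg)
      have "r j = cj * suminf g" unfolding r_def cj_def g_def[abs_def] by (rule refl)
      also have "\<dots> = suminf (\<lambda>m. h j m)" unfolding hg by (rule suminf_mult[OF sg, symmetric])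
      also have "\<dots> = infsum (\<lambda>m. h j m) UNIV" by (rule nat_infsum_suminf(2)[OF row, symmetric])
      finally show ?thesis .
    qed
    have r_eq: "r = (\<lambda>j. infsum (\<lambda>m. h j m) UNIV)" using rj by (intro ext) simp
    have rs: "r summable_on UNIV" using rows unfolding r_eq .
    have sr: "summable r" by (rule nat_infsum_suminf(1)[OF rs])
    define L where "L m = infsum (\<lambda>j. h j m) UNIV" for m
    have L_eq: "L = (\<lambda>m. infsum (\<lambda>j. h j m) UNIV)" by (intro ext) (simp add: L_def)
    have Ls: "L summable_on UNIV" using cols unfolding L_eq .
    have sL: "summable L" by (rule nat_infsum_suminf(1)[OF Ls])
    have suminf_eq: "suminf r = suminf L"
      using nat_infsum_suminf(2)[OF rs] nat_infsum_suminf(2)[OF Ls] swap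
      unfolding r_eq L_eq by simp
    have facL: "fac (Suc m) = exp (L m)" for m
    proof -
      have A0: "a (Suc m) \<ge> 0" using a0 by simp
      have "a (Suc m) * norm z * (1 + norm (t (Suc m))) \<le> M * norm z * (1 + T)"
        using a0 aM tb T0 M0 by (intro mult_mono) auto
      then have lt: "a (Suc m) * norm z * (1 + norm (t (Suc m))) < 1" using rho by (simp add: mult_ac)
      note lf = log_factor[OF A0 lt]
      have "(\<lambda>j. h j m) sums L m"
        using nat_infsum_suminf[OF col] by (simp add: L_def sums_iff)
      then have "L m = ln (1 - of_real (a (Suc m)) * z * (t (Suc m) - 1)) - ln (1 - of_real (a (Suc m)) * z * t (Suc m))"
        using lf(1) sums_unique2 unfolding h_def by blast
      then show ?thesis using lf(2) by (simp add: fac_def)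
    qed
    have "(\<lambda>N. \<Prod>i\<in>{1..N}. fac i) = (\<lambda>N. exp (\<Sum>m<N. L m))"
      unfolding prod_1N facL by (simp add: exp_sum)
    moreover have "(\<lambda>N. exp (\<Sum>m<N. L m)) \<longlonglongrightarrow> exp (suminf L)"
      by (intro tendsto_exp summable_LIMSEQ sL)
    ultimately show ?thesis using sr suminf_eq by simp
  qed
  then show "summable (\<lambda>j. z ^ Suc j / of_nat (Suc j) *
             (\<Sum>m. of_real (a (Suc m)) ^ Suc j * (t (Suc m) ^ Suc j - (t (Suc m) - 1) ^ Suc j)))"
    and "(\<lambda>N. \<Prod>i\<in>{1..N}. 1 + of_real (a i) * z / (1 - of_real (a i) * z * t i)) \<longlonglongrightarrow>
           exp (\<Sum>j. z ^ Suc j / of_nat (Suc j) *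
             (\<Sum>m. of_real (a (Suc m)) ^ Suc j * (t (Suc m) ^ Suc j - (t (Suc m) - 1) ^ Suc j)))"
    unfolding r_def fac_def by auto
qed


lemma Mset_Sall: "Mset k = {l \<in> Sall. length l = k}"
  by (auto simp: Mset_def Sall_def)

lemma a_bound:
  fixes a :: "nat \<Rightarrow> real"
  assumes apos: "\<forall>m\<ge>1. a m > 0" and asum: "summable (\<lambda>m. a (Suc m))"
  shows "bdd_above (a ` {1..})" "\<forall>m\<ge>1. a m \<le> Sup (a ` {1..})" "Sup (a ` {1..}) > 0"
proof -
  have le: "a m \<le> suminf (\<lambda>m. a (Suc m))" if m1: "m \<ge> 1" for m
  proof -
    obtain k where k: "m = Suc k" using m1 by (cases m) auto
    have "sum (\<lambda>m. a (Suc m)) {k} \<le> suminf (\<lambda>m. a (Suc m))"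
      using sum_le_suminf[of "\<lambda>m. a (Suc m)" "{k}"] asum apos by (simp add: less_imp_le)
    then show ?thesis by (simp add: k)
  qed
  show bdd: "bdd_above (a ` {1..})" using le by (auto simp: bdd_above_def)
  show "\<forall>m\<ge>1. a m \<le> Sup (a ` {1..})" using bdd by (auto intro!: cSup_upper)
  then have "a 1 \<le> Sup (a ` {1..})" by simp
  then show "Sup (a ` {1..}) > 0" using apos by (meson le_numeral_extra(4) order_less_le_trans)
qed

lemma main_vec:
  fixes a :: "nat \<Rightarrow> real" and t :: "nat \<Rightarrow> complex" and T :: real and z :: complex
  assumes apos: "\<forall>m\<ge>1. a m > 0" and asum: "summable (\<lambda>m. a (Suc m))"
    and tbd: "\<forall>m\<ge>1. norm (t m) \<le> T" and zc: "norm z * Sup (a ` {1..}) * (1 + T) < 1"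
  shows "(\<lambda>l. norm (Fz a t z l)) summable_on Sall"
    and "(Fz a t z has_sum exp (\<Sum>j. z ^ Suc j / of_nat (Suc j) *
             (\<Sum>m. of_real (a (Suc m)) ^ Suc j * (t (Suc m) ^ Suc j - (t (Suc m) - 1) ^ Suc j)))) Sall"
    and "(\<lambda>m. 1 + of_real (a (Suc m)) * z / (1 - of_real (a (Suc m)) * z * t (Suc m)))
             has_prod exp (\<Sum>j. z ^ Suc j / of_nat (Suc j) *
             (\<Sum>m. of_real (a (Suc m)) ^ Suc j * (t (Suc m) ^ Suc j - (t (Suc m) - 1) ^ Suc j)))"
    and "summable (\<lambda>j. z ^ Suc j / of_nat (Suc j) *
             (\<Sum>m. of_real (a (Suc m)) ^ Suc j * (t (Suc m) ^ Suc j - (t (Suc m) - 1) ^ Suc j)))"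
proof -
  define M where "M = Sup (a ` {1..})"
  have aM: "\<forall>m\<ge>1. a m \<le> M" using a_bound[OF apos asum] by (simp add: M_def)
  have M0: "M > 0" using a_bound[OF apos asum] by (simp add: M_def)
  have a0: "\<forall>m\<ge>1. a m \<ge> 0" using apos by (simp add: less_imp_le)
  have T0: "T \<ge> 0" using tbd[rule_format, of 1] norm_ge_zero[of "t 1"] by linarith
  have rho: "norm z * M * (1 + T) < 1" using zc by (simp add: M_def)
  define E where "E = exp (\<Sum>j. z ^ Suc j / of_nat (Suc j) *
             (\<Sum>m. of_real (a (Suc m)) ^ Suc j * (t (Suc m) ^ Suc j - (t (Suc m) - 1) ^ Suc j)))"
  note an = analytic[OF a0 asum tbd aM rho]
  show "summable (\<lambda>j. z ^ Suc j / of_nat (Suc j) *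
             (\<Sum>m. of_real (a (Suc m)) ^ Suc j * (t (Suc m) ^ Suc j - (t (Suc m) - 1) ^ Suc j)))"
    by (rule an(1))
  define P where "P N = (\<Prod>i\<in>{1..N}. 1 + of_real (a i) * z / (1 - of_real (a i) * z * t i))" for N
  have PE: "P \<longlonglongrightarrow> E" unfolding P_def[abs_def] E_def by (rule an(2))
  define Q where "Q N = (\<Prod>i\<in>{1..N}. 1 + a i * norm z / (1 - a i * norm z * norm (t i)))" for N
  have tbd': "\<forall>m\<ge>1. norm (complex_of_real (norm (t m))) \<le> T" using tbd by simp
  have rho': "norm (complex_of_real (norm z)) * M * (1 + T) < 1" using rho by simp
  note an' = analytic[OF a0 asum tbd' aM rho']
  obtain E' where E': "(\<lambda>N. complex_of_real (Q N)) \<longlonglongrightarrow> E'"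
    using an'(2) by (auto simp: Q_def)
  define Ql where "Ql = Re E'"
  have QQl: "Q \<longlonglongrightarrow> Ql" unfolding Ql_def using tendsto_Re[OF E'] by simp
  have lt1: "a i * norm z * norm (t i) < 1" if "i \<ge> 1" for i
  proof -
    have "a i * norm z * norm (t i) \<le> M * norm z * (1 + T)"
      using that a0 aM tbd T0 less_imp_le[OF M0] by (intro mult_mono) auto
    then show ?thesis using rho by (simp add: mult_ac)
  qed
  have H: "\<And>i. i\<in>{1..N} \<Longrightarrow> a i \<ge> 0 \<and> a i * norm z * norm (t i) < 1" for N
    using a0 lt1 by auto
  note fc = finite_case[OF H]
  have fac1: "1 + a i * norm z / (1 - a i * norm z * norm (t i)) \<ge> 1" if "i \<ge> 1" for i
    using lt1[OF that] a0 that by simp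
  have Q0: "Q N \<ge> 0" for N unfolding Q_def
    by (rule prod_nonneg) (use fac1 in \<open>auto intro: order_trans[OF zero_le_one]\<close>)
  have Qinc: "incseq Q"
  proof (rule incseq_SucI)
    fix N
    have "Q (Suc N) = (1 + a (Suc N) * norm z / (1 - a (Suc N) * norm z * norm (t (Suc N)))) * Q N"
      unfolding Q_def by (simp add: atLeastAtMostSuc_conv)
    then show "Q N \<le> Q (Suc N)" using fac1[of "Suc N"] Q0[of N]
      by (simp add: mult_le_cancel_right1 order_trans[OF _ mult_right_mono])
  qed
  have QleQl: "Q N \<le> Ql" for N by (rule incseq_le[OF Qinc QQl])
  have finbound: "sum (\<lambda>l. norm (Fz a t z l)) A \<le> Ql" if A: "finite A" "A \<subseteq> Sall" for A
  proof -
    define K where "K = Max (insert 0 (\<Union>l\<in>A. set l))"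
    have "A \<subseteq> SN K"
    proof
      fix l assume l: "l \<in> A"
      have "x \<le> K" if "x \<in> set l" for x
        unfolding K_def using l that A by (intro Max_ge) auto
      then show "l \<in> SN K" using l A by (auto simp: SN_def Sall_def)
    qed
    then have "sum (\<lambda>l. norm (Fz a t z l)) A \<le> Q K"
      unfolding Q_def by (intro finite_sum_le_has_sum[OF fc(2)]) (use A in auto)
    also have "\<dots> \<le> Ql" by (rule QleQl)
    finally show ?thesis .
  qed
  show nsum: "(\<lambda>l. norm (Fz a t z l)) summable_on Sall"
    by (rule nonneg_bdd_above_summable_on) (use finbound in \<open>auto simp: bdd_above_def\<close>)
  have Fsum: "Fz a t z summable_on Sall" using nsum by (rule abs_summable_summable)
  have infn: "infsum (\<lambda>l. norm (Fz a t z l)) Sall \<le> Ql"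
    by (rule infsum_le_finite_sums[OF nsum]) (use finbound in auto)
  have SNsub: "SN N \<subseteq> Sall" for N by (auto simp: SN_def)
  have split: "Sall = SN N \<union> (Sall - SN N)" for N using SNsub by auto
  have est: "norm (infsum (Fz a t z) Sall - P N) \<le> Ql - Q N" for N
  proof -
    have s1: "Fz a t z summable_on SN N" by (rule summable_on_subset_banach[OF Fsum SNsub])
    have s2: "Fz a t z summable_on (Sall - SN N)" by (rule summable_on_subset_banach[OF Fsum]) auto
    have n1: "(\<lambda>l. norm (Fz a t z l)) summable_on SN N" by (rule summable_on_subset_banach[OF nsum SNsub])
    have n2: "(\<lambda>l. norm (Fz a t z l)) summable_on (Sall - SN N)" by (rule summable_on_subset_banach[OF nsum]) auto
    have "infsum (Fz a t z) Sall = infsum (Fz a t z) (SN N) + infsum (Fz a t z) (Sall - SN N)"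
      by (subst split[of N]) (rule infsum_Un_disjoint[OF s1 s2], auto)
    moreover have "infsum (Fz a t z) (SN N) = P N" unfolding P_def by (rule infsumI[OF fc(1)])
    ultimately have "infsum (Fz a t z) Sall - P N = infsum (Fz a t z) (Sall - SN N)" by simp
    then have "norm (infsum (Fz a t z) Sall - P N) \<le> infsum (\<lambda>l. norm (Fz a t z l)) (Sall - SN N)"
      using norm_infsum_bound[OF n2] by simp
    also have "infsum (\<lambda>l. norm (Fz a t z l)) Sall = infsum (\<lambda>l. norm (Fz a t z l)) (SN N) + infsum (\<lambda>l. norm (Fz a t z l)) (Sall - SN N)"
      by (subst split[of N]) (rule infsum_Un_disjoint[OF n1 n2], auto)
    moreover have "infsum (\<lambda>l. norm (Fz a t z l)) (SN N) = Q N" unfolding Q_def by (rule infsumI[OF fc(2)])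
    ultimately show ?thesis using infn by simp
  qed
  have "(\<lambda>N. P N - infsum (Fz a t z) Sall) \<longlonglongrightarrow> 0"
  proof (rule Lim_null_comparison)
    show "\<forall>\<^sub>F N in sequentially. norm (P N - infsum (Fz a t z) Sall) \<le> Ql - Q N"
      using est by (simp add: norm_minus_commute)
    show "(\<lambda>N. Ql - Q N) \<longlonglongrightarrow> 0" using tendsto_diff[OF tendsto_const QQl, of Ql] by simp
  qed
  then have "P \<longlonglongrightarrow> infsum (Fz a t z) Sall" by (simp add: LIM_zero_iff)
  then have infE: "infsum (Fz a t z) Sall = E" using PE LIMSEQ_unique by blast
  have hasE: "(Fz a t z has_sum E) Sall" using Fsum infE by (metis has_sum_infsum)
  from hasE show "(Fz a t z has_sum exp (\<Sum>j. z ^ Suc j / of_nat (Suc j) *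
             (\<Sum>m. of_real (a (Suc m)) ^ Suc j * (t (Suc m) ^ Suc j - (t (Suc m) - 1) ^ Suc j)))) Sall"
    by (simp add: E_def)
  have "(\<lambda>n. \<Prod>i\<le>n. 1 + of_real (a (Suc i)) * z / (1 - of_real (a (Suc i)) * z * t (Suc i))) = (\<lambda>n. P (Suc n))"
    unfolding P_def prod_1N by (simp add: lessThan_Suc_atMost)
  moreover have "(\<lambda>n. P (Suc n)) \<longlonglongrightarrow> E" using PE by (rule LIMSEQ_Suc)
  ultimately have "raw_has_prod (\<lambda>m. 1 + of_real (a (Suc m)) * z / (1 - of_real (a (Suc m)) * z * t (Suc m))) 0 E"
    by (simp add: raw_has_prod_def E_def)
  then show "(\<lambda>m. 1 + of_real (a (Suc m)) * z / (1 - of_real (a (Suc m)) * z * t (Suc m)))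
             has_prod exp (\<Sum>j. z ^ Suc j / of_nat (Suc j) *
             (\<Sum>m. of_real (a (Suc m)) ^ Suc j * (t (Suc m) ^ Suc j - (t (Suc m) - 1) ^ Suc j)))"
    by (simp add: has_prod_def E_def)
qed


lemma theta_part1:
  fixes a :: "nat \<Rightarrow> real" and t :: "nat \<Rightarrow> complex" and T :: real
  assumes apos: "\<forall>m\<ge>1. a m > 0" and asum: "summable (\<lambda>m. a (Suc m))"
    and tbd: "\<forall>m\<ge>1. norm (t m) \<le> T"
  shows "(\<lambda>l. norm (theta_vec_term a t l)) summable_on Mset k"
proof -
  define M where "M = Sup (a ` {1..})"
  have M0: "M > 0" using a_bound[OF apos asum] by (simp add: M_def)
  have T0: "T \<ge> 0" using tbd[rule_format, of 1] norm_ge_zero[of "t 1"] by linarith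
  define K where "K = M * (1 + T)"
  have K0: "K > 0" using M0 T0 by (simp add: K_def)
  define w :: real where "w = 1 / (2 * K)"
  have w0: "w > 0" using K0 by (simp add: w_def)
  define z1 :: complex where "z1 = of_real w"
  have nz: "norm z1 = w" using w0 by (simp add: z1_def)
  have "w * K = 1 / 2" using K0 unfolding w_def by simp
  then have "w * M * (1 + T) = 1 / 2" by (simp add: K_def mult.assoc)
  then have "norm z1 * Sup (a ` {1..}) * (1 + T) < 1"
    unfolding nz M_def[symmetric] by simp
  note mv = main_vec[OF apos asum tbd this]
  have s: "(\<lambda>l. norm (Fz a t z1 l)) summable_on Mset k"
    by (rule summable_on_subset_banach[OF mv(1)]) (auto simp: Mset_Sall)
  then have "(\<lambda>l. norm (Fz a t z1 l) * inverse (w ^ k)) summable_on Mset k"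
    by (rule summable_on_cmult_left)
  moreover have "norm (Fz a t z1 l) * inverse (w ^ k) = norm (theta_vec_term a t l)" if "l \<in> Mset k" for l
    using that w0 by (simp add: Fz_def Mset_def norm_mult norm_power nz)
  ultimately show ?thesis by (rule summable_on_cong[THEN iffD1, rotated]) (simp)
qed

lemma theta_series:
  fixes a :: "nat \<Rightarrow> real" and t :: "nat \<Rightarrow> complex" and T :: real and z :: complex
  assumes apos: "\<forall>m\<ge>1. a m > 0" and asum: "summable (\<lambda>m. a (Suc m))"
    and tbd: "\<forall>m\<ge>1. norm (t m) \<le> T" and zc: "norm z * Sup (a ` {1..}) * (1 + T) < 1"
  shows "summable (\<lambda>k. norm (theta_vec a t k * z ^ k))"
    and "(\<lambda>k. theta_vec a t k * z ^ k) sums exp (\<Sum>j. z ^ Suc j / of_nat (Suc j) *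
             (\<Sum>m. of_real (a (Suc m)) ^ Suc j * (t (Suc m) ^ Suc j - (t (Suc m) - 1) ^ Suc j)))"
proof -
  define E where "E = exp (\<Sum>j. z ^ Suc j / of_nat (Suc j) *
             (\<Sum>m. of_real (a (Suc m)) ^ Suc j * (t (Suc m) ^ Suc j - (t (Suc m) - 1) ^ Suc j)))"
  note mv = main_vec[OF apos asum tbd zc]
  have hs: "(Fz a t z has_sum E) Sall" using mv(2) by (simp add: E_def)
  have bij: "bij_betw (\<lambda>l. (length l, l)) Sall (Sigma UNIV Mset)"
    by (rule bij_betwI[where g=snd]) (auto simp: Mset_Sall)
  have hs2: "((\<lambda>p. Fz a t z (snd p)) has_sum E) (Sigma UNIV Mset)"
    using hs has_sum_reindex_bij_betw[OF bij, of "\<lambda>p. Fz a t z (snd p)" E] by simp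
  have hk: "((\<lambda>l. Fz a t z (snd (k, l))) has_sum theta_vec a t k * z ^ k) (Mset k)" for k
  proof -
    have "(\<lambda>l. norm (theta_vec_term a t l)) summable_on Mset k"
      by (rule theta_part1[OF apos asum tbd])
    then have "theta_vec_term a t summable_on Mset k" by (rule abs_summable_summable)
    then have "(theta_vec_term a t has_sum theta_vec a t k) (Mset k)"
      unfolding theta_vec_def by (rule has_sum_infsum)
    then have "((\<lambda>l. theta_vec_term a t l * z ^ k) has_sum theta_vec a t k * z ^ k) (Mset k)"
      by (rule has_sum_cmult_left)
    then show ?thesis
      by (rule has_sum_cong[THEN iffD1, rotated]) (auto simp: Fz_def Mset_def)
  qed
  have hsum: "((\<lambda>k. theta_vec a t k * z ^ k) has_sum E) UNIV"
    by (rule has_sum_Sigma'[OF hs2 hk])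
  then show "(\<lambda>k. theta_vec a t k * z ^ k) sums exp (\<Sum>j. z ^ Suc j / of_nat (Suc j) *
             (\<Sum>m. of_real (a (Suc m)) ^ Suc j * (t (Suc m) ^ Suc j - (t (Suc m) - 1) ^ Suc j)))"
    unfolding E_def by (rule has_sum_imp_sums)
  have "(\<lambda>k. theta_vec a t k * z ^ k) summable_on UNIV" using hsum by (auto simp: summable_on_def)
  then have "(\<lambda>k. norm (theta_vec a t k * z ^ k)) summable_on UNIV"
    by (simp add: summable_on_iff_abs_summable_on_complex)
  then show "summable (\<lambda>k. norm (theta_vec a t k * z ^ k))" by (rule summable_on_imp_summable)
qed

lemma sig_sum: "sig l = (\<Sum>i\<in>set l. sig_i i l)"
proof -
  have eq: "{j. j + 1 < length l \<and> l ! j = l ! (j + 1)} =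
      (\<Union>i\<in>set l. {j. j + 1 < length l \<and> l ! j = i \<and> l ! (j + 1) = i})"
    by auto
  have "card (\<Union>i\<in>set l. {j. j + 1 < length l \<and> l ! j = i \<and> l ! (j + 1) = i}) =
      (\<Sum>i\<in>set l. card {j. j + 1 < length l \<and> l ! j = i \<and> l ! (j + 1) = i})"
    by (rule card_UN_disjoint) (auto intro: finite_subset[of _ "{..<length l}"])
  then show ?thesis unfolding sig_def sig_i_def eq .
qed

lemma theta_sc_eq: "theta_sc a s k = theta_vec a (\<lambda>_. s) k"
proof -
  have "theta_sc_term a s = theta_vec_term a (\<lambda>_. s)"
    by (rule ext) (simp add: theta_sc_term_def theta_vec_term_def sig_sum power_sum)
  then show ?thesis by (simp add: theta_sc_def theta_vec_def)
qed

lemma theta_sc_term_eq: "theta_sc_term a s = theta_vec_term a (\<lambda>_. s)"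
  by (rule ext) (simp add: theta_sc_term_def theta_vec_term_def sig_sum power_sum)

lemma suminf_pow_sc:
  fixes a :: "nat \<Rightarrow> real" and w :: complex
  assumes apos: "\<forall>m\<ge>1. a m > 0" and asum: "summable (\<lambda>m. a (Suc m))"
  shows "(\<Sum>m. of_real (a (Suc m)) ^ Suc j * w) = of_real (\<Sum>m. a (Suc m) ^ Suc j) * w"
proof -
  define M where "M = Sup (a ` {1..})"
  have aM: "\<forall>m\<ge>1. a m \<le> M" using a_bound[OF apos asum] by (simp add: M_def)
  have sp: "summable (\<lambda>m. a (Suc m) ^ Suc j)"
  proof (rule summable_comparison_test[OF _ summable_mult2[OF asum, of "M ^ j"]])
    show "\<exists>N. \<forall>n\<ge>N. norm (a (Suc n) ^ Suc j) \<le> a (Suc n) * M ^ j"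
    proof (intro exI allI impI)
      fix n :: nat
      have a0: "a (Suc n) \<ge> 0" using apos by (simp add: less_imp_le)
      have "a (Suc n) ^ j \<le> M ^ j" using a0 aM by (intro power_mono) auto
      then show "norm (a (Suc n) ^ Suc j) \<le> a (Suc n) * M ^ j"
        using a0 by (simp add: mult_left_mono)
    qed
  qed
  have s2: "summable (\<lambda>m. complex_of_real (a (Suc m) ^ Suc j))"
    by (subst summable_complex_of_real) (rule sp)
  have "(\<Sum>m. of_real (a (Suc m)) ^ Suc j * w) = (\<Sum>m. complex_of_real (a (Suc m) ^ Suc j) * w)"
    by (simp only: of_real_power)
  also have "\<dots> = (\<Sum>m. complex_of_real (a (Suc m) ^ Suc j)) * w"
    by (rule suminf_mult2[OF s2, symmetric])
  also have "\<dots> = of_real (\<Sum>m. a (Suc m) ^ Suc j) * w"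
    by (simp only: suminf_of_real[OF sp])
  finally show ?thesis .
qed

theorem mainTheorem10:
  fixes a :: "nat \<Rightarrow> real" and t :: "nat \<Rightarrow> complex" and T :: real
  assumes apos: "\<forall>m\<ge>1. a m > 0"
    and asum: "summable (\<lambda>m. a (Suc m))"
    and tbd: "\<forall>m\<ge>1. norm (t m) \<le> T"
  shows "(\<forall>k. (\<lambda>l. norm (theta_vec_term a t l)) summable_on Mset k)
    \<and> (\<forall>z::complex. norm z * Sup (a ` {1..}) * (1 + T) < 1 \<longrightarrow>
          summable (\<lambda>k. norm (theta_vec a t k * z ^ k))
        \<and> ((\<lambda>m. 1 + of_real (a (Suc m)) * z / (1 - of_real (a (Suc m)) * z * t (Suc m)))
             has_prod (\<Sum>k. theta_vec a t k * z ^ k))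
        \<and> summable (\<lambda>j. z ^ Suc j / of_nat (Suc j) *
             (\<Sum>m. of_real (a (Suc m)) ^ Suc j * (t (Suc m) ^ Suc j - (t (Suc m) - 1) ^ Suc j)))
        \<and> (\<Sum>k. theta_vec a t k * z ^ k) =
           exp (\<Sum>j. z ^ Suc j / of_nat (Suc j) *
             (\<Sum>m. of_real (a (Suc m)) ^ Suc j * (t (Suc m) ^ Suc j - (t (Suc m) - 1) ^ Suc j))))
    \<and> (\<forall>s::complex. \<forall>k. (\<lambda>l. norm (theta_sc_term a s l)) summable_on Mset k)
    \<and> (\<forall>s::complex. \<forall>z::complex. norm z * Sup (a ` {1..}) * (1 + norm s) < 1 \<longrightarrow>
          summable (\<lambda>k. norm (theta_sc a s k * z ^ k))
        \<and> ((\<lambda>m. 1 + of_real (a (Suc m)) * z / (1 - of_real (a (Suc m)) * z * s))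
             has_prod (\<Sum>k. theta_sc a s k * z ^ k))
        \<and> summable (\<lambda>j. z ^ Suc j / of_nat (Suc j) *
             of_real (\<Sum>m. a (Suc m) ^ Suc j) * (s ^ Suc j - (s - 1) ^ Suc j))
        \<and> (\<Sum>k. theta_sc a s k * z ^ k) =
           exp (\<Sum>j. z ^ Suc j / of_nat (Suc j) *
             of_real (\<Sum>m. a (Suc m) ^ Suc j) * (s ^ Suc j - (s - 1) ^ Suc j)))"
proof -
  have V: "summable (\<lambda>k. norm (theta_vec a t' k * z ^ k))
        \<and> ((\<lambda>m. 1 + of_real (a (Suc m)) * z / (1 - of_real (a (Suc m)) * z * t' (Suc m)))
             has_prod (\<Sum>k. theta_vec a t' k * z ^ k))
        \<and> summable (\<lambda>j. z ^ Suc j / of_nat (Suc j) *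
             (\<Sum>m. of_real (a (Suc m)) ^ Suc j * (t' (Suc m) ^ Suc j - (t' (Suc m) - 1) ^ Suc j)))
        \<and> (\<Sum>k. theta_vec a t' k * z ^ k) =
           exp (\<Sum>j. z ^ Suc j / of_nat (Suc j) *
             (\<Sum>m. of_real (a (Suc m)) ^ Suc j * (t' (Suc m) ^ Suc j - (t' (Suc m) - 1) ^ Suc j)))"
    if tbd': "\<forall>m\<ge>1. norm (t' m) \<le> T'" and zc: "norm z * Sup (a ` {1..}) * (1 + T') < 1"
    for t' :: "nat \<Rightarrow> complex" and T' :: real and z :: complex
  proof -
    note ts = theta_series[OF apos asum tbd' zc]
    note mv = main_vec[OF apos asum tbd' zc]
    have eq: "(\<Sum>k. theta_vec a t' k * z ^ k) = exp (\<Sum>j. z ^ Suc j / of_nat (Suc j) *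
             (\<Sum>m. of_real (a (Suc m)) ^ Suc j * (t' (Suc m) ^ Suc j - (t' (Suc m) - 1) ^ Suc j)))"
      using ts(2) by (rule sums_unique[symmetric])
    show ?thesis using ts(1) mv(3,4) eq by simp
  qed
  have S: "(\<lambda>j. z ^ Suc j / of_nat (Suc j) *
             of_real (\<Sum>m. a (Suc m) ^ Suc j) * (s ^ Suc j - (s - 1) ^ Suc j)) =
           (\<lambda>j. z ^ Suc j / of_nat (Suc j) *
             (\<Sum>m. of_real (a (Suc m)) ^ Suc j * ((\<lambda>_. s) (Suc m) ^ Suc j - ((\<lambda>_. s) (Suc m) - 1) ^ Suc j)))"
    for z s :: complex
    by (rule ext) (simp only: suminf_pow_sc[OF apos asum] mult.assoc)
  show ?thesis
  proof (intro conjI allI impI)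
    fix k show "(\<lambda>l. norm (theta_vec_term a t l)) summable_on Mset k"
      by (rule theta_part1[OF apos asum tbd])
  next
    fix s :: complex and k
    show "(\<lambda>l. norm (theta_sc_term a s l)) summable_on Mset k"
      unfolding theta_sc_term_eq by (rule theta_part1[OF apos asum, of _ "norm s"]) simp
  next
    fix z :: complex assume zc: "norm z * Sup (a ` {1..}) * (1 + T) < 1"
    note V[OF tbd zc]
    then show "summable (\<lambda>k. norm (theta_vec a t k * z ^ k))"
      and "(\<lambda>m. 1 + of_real (a (Suc m)) * z / (1 - of_real (a (Suc m)) * z * t (Suc m)))
             has_prod (\<Sum>k. theta_vec a t k * z ^ k)"
      and "summable (\<lambda>j. z ^ Suc j / of_nat (Suc j) *
             (\<Sum>m. of_real (a (Suc m)) ^ Suc j * (t (Suc m) ^ Suc j - (t (Suc m) - 1) ^ Suc j)))"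
      and "(\<Sum>k. theta_vec a t k * z ^ k) =
           exp (\<Sum>j. z ^ Suc j / of_nat (Suc j) *
             (\<Sum>m. of_real (a (Suc m)) ^ Suc j * (t (Suc m) ^ Suc j - (t (Suc m) - 1) ^ Suc j)))"
      by auto
  next
    fix s z :: complex assume zc: "norm z * Sup (a ` {1..}) * (1 + norm s) < 1"
    have tb': "\<forall>m\<ge>1. norm ((\<lambda>_. s) m) \<le> norm s" by simp
    note V[OF tb' zc]
    then show "summable (\<lambda>k. norm (theta_sc a s k * z ^ k))"
      and "(\<lambda>m. 1 + of_real (a (Suc m)) * z / (1 - of_real (a (Suc m)) * z * s))
             has_prod (\<Sum>k. theta_sc a s k * z ^ k)"
      and "summable (\<lambda>j. z ^ Suc j / of_nat (Suc j) *
             of_real (\<Sum>m. a (Suc m) ^ Suc j) * (s ^ Suc j - (s - 1) ^ Suc j))"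
      and "(\<Sum>k. theta_sc a s k * z ^ k) =
           exp (\<Sum>j. z ^ Suc j / of_nat (Suc j) *
             of_real (\<Sum>m. a (Suc m) ^ Suc j) * (s ^ Suc j - (s - 1) ^ Suc j))"
      unfolding theta_sc_eq S by auto
  qed
qed
end
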